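(* Let $T$ be an automorphism of a Lebesgue space $(X,\Sigma,\mu)$ and let $m\ge1$ be an integer. Then for every $g\in\mathcal{G}_0$ we have $h_\mu(g,T^m)\le m\,h_\mu(g,T)$.
   Context: $\mathcal{G}_0$ is the set of concave functions $g:[0,1]\to\mathbb{R}$ with $g(0)=\lim_{x\to0^+}g(x)=0$. For a measure-preserving $S$ and a finite measurable partition $\mathcal{P}$, let $\mathcal{P}_n^S=\bigvee_{i=0}^{n-1}S^{-i}\mathcal{P}$, $H(g,\mathcal{P})=\sum_{A\in\mathcal{P}}g(\mu(A))$, and $h_\mu(g,S,\mathcal{P})=\limsup_{n\to\infty}\frac1nH(g,\mathcal{P}_n^S)$. Finally, $h_\mu(g,S)=\sup_{\mathcal{P}\text{ finite}}h_\mu(g,S,\mathcal{P})$. *)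

theory Defs
  imports "HOL-Probability.Probability"
begin

definition G0 :: "(real \<Rightarrow> real) set" where
  "G0 = {g. concave_on {0..1} g \<and> g 0 = 0 \<and> (g \<longlongrightarrow> 0) (at_right 0)}"

text \<open>Lebesgue space (Rokhlin): a complete probability space which is isomorphic mod 0
  to the completion of a Borel probability measure on the real line.\<close>
definition lebesgue_space :: "'a measure \<Rightarrow> bool" where
  "lebesgue_space M \<longleftrightarrow> prob_space M \<and>
     (\<forall>A B. B \<in> null_sets M \<and> A \<subseteq> B \<longrightarrow> A \<in> sets M) \<and>
     (\<exists>(\<nu>::real measure) f N N'.
        sets \<nu> = sets borel \<and> prob_space \<nu> \<and>
        N \<in> null_sets M \<and> N' \<in> null_sets (completion \<nu>) \<and>
        bij_betw f (space M - N) (UNIV - N') \<and>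
        (\<forall>A. A \<subseteq> space M - N \<longrightarrow> (A \<in> sets M \<longleftrightarrow> f ` A \<in> sets (completion \<nu>))) \<and>
        (\<forall>A\<in>sets M. A \<subseteq> space M - N \<longrightarrow> measure M A = measure (completion \<nu>) (f ` A)))"

definition automorphism :: "'a measure \<Rightarrow> ('a \<Rightarrow> 'a) \<Rightarrow> bool" where
  "automorphism M T \<longleftrightarrow> bij_betw T (space M) (space M) \<and> T \<in> M \<rightarrow>\<^sub>M M \<and>
     inv_into (space M) T \<in> M \<rightarrow>\<^sub>M M \<and>
     (\<forall>A\<in>sets M. measure M (T -` A \<inter> space M) = measure M A)"

definition finite_partition :: "'a measure \<Rightarrow> 'a set set \<Rightarrow> bool" where
  "finite_partition M P \<longleftrightarrow> finite P \<and> P \<subseteq> sets M \<and> \<Union>P = space M \<and>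
     disjoint P"

definition iter_join :: "'a measure \<Rightarrow> ('a \<Rightarrow> 'a) \<Rightarrow> 'a set set \<Rightarrow> nat \<Rightarrow> 'a set set" where
  "iter_join M S P n = {space M \<inter> (\<Inter>i\<in>{..<n}. (S ^^ i) -` c i) | c. \<forall>i<n. c i \<in> P}"

definition gen_H :: "'a measure \<Rightarrow> (real \<Rightarrow> real) \<Rightarrow> 'a set set \<Rightarrow> real" where
  "gen_H M g P = (\<Sum>A\<in>P. g (measure M A))"

definition gen_entropy_part :: "'a measure \<Rightarrow> (real \<Rightarrow> real) \<Rightarrow> ('a \<Rightarrow> 'a) \<Rightarrow> 'a set set \<Rightarrow> ereal" where
  "gen_entropy_part M g S P = limsup (\<lambda>n. ereal (gen_H M g (iter_join M S P n) / real n))"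

definition gen_entropy :: "'a measure \<Rightarrow> (real \<Rightarrow> real) \<Rightarrow> ('a \<Rightarrow> 'a) \<Rightarrow> ereal" where
  "gen_entropy M g S = (SUP P\<in>{P. finite_partition M P}. gen_entropy_part M g S P)"

end

theory Submission
  imports Defs
begin

lemma g_subadd:
  fixes g :: "real \<Rightarrow> real"
  assumes cc: "concave_on {0..1} g" and g0: "g 0 = 0"
    and a: "0 \<le> a" and b: "0 \<le> b" and ab: "a + b \<le> 1"
  shows "g (a + b) \<le> g a + g b"
proof (cases "a = 0 \<or> b = 0")
  case True then show ?thesis using g0 by auto
next
  case False
  define s where "s = a + b"
  have s: "s > 0" "s \<in> {0..1}" using False a b ab by (auto simp: s_def)
  have cv: "convex_on {0..1} (\<lambda>x. - g x)" using cc by (simp add: concave_on_def)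
  have z: "(0::real) \<in> {0..1}" by simp
  have 1: "- g ((1 - b/s) *\<^sub>R s + (b/s) *\<^sub>R 0) \<le> (1 - b/s) * (- g s) + (b/s) * (- g 0)"
    by (rule convex_onD[OF cv]) (use s a b in \<open>auto simp: s_def\<close>)
  have e1: "(1 - b/s) *\<^sub>R s + (b/s) *\<^sub>R 0 = a"
  proof -
    have "(1 - b/s) * s = s - b" using s(1) by (simp add: field_simps)
    then show ?thesis by (simp add: s_def)
  qed
  have 2: "- g ((1 - a/s) *\<^sub>R s + (a/s) *\<^sub>R 0) \<le> (1 - a/s) * (- g s) + (a/s) * (- g 0)"
    by (rule convex_onD[OF cv]) (use s a b in \<open>auto simp: s_def\<close>)
  have e2: "(1 - a/s) *\<^sub>R s + (a/s) *\<^sub>R 0 = b"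
  proof -
    have "(1 - a/s) * s = s - a" using s(1) by (simp add: field_simps)
    then show ?thesis by (simp add: s_def)
  qed
  have h1: "(1 - b/s) + (1 - a/s) = 1"
  proof -
    have "(1 - b/s) + (1 - a/s) = (2 * s - (a+b))/s" using s(1) by (simp add: field_simps)
    then show ?thesis using s(1) by (simp add: s_def)
  qed
  moreover have "g a \<ge> (1 - b/s) * g s" using 1 e1 g0 by simp
  moreover have "g b \<ge> (1 - a/s) * g s" using 2 e2 g0 by simp
  moreover have "(1 - b/s) * g s + (1 - a/s) * g s = g s"
    by (metis h1 distrib_right mult_1)
  ultimately have "g a + g b \<ge> g s" by linarith
  then show ?thesis by (simp add: s_def)
qed

lemma g_subadd_sum:
  fixes g :: "real \<Rightarrow> real"
  assumes cc: "concave_on {0..1} g" and g0: "g 0 = 0"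
  shows "finite F \<Longrightarrow> (\<forall>x\<in>F. 0 \<le> f x) \<Longrightarrow> sum f F \<le> 1 \<Longrightarrow> g (sum f F) \<le> (\<Sum>x\<in>F. g (f x))"
proof (induction F rule: finite_induct)
  case empty then show ?case using g0 by simp
next
  case (insert x F)
  have nn: "0 \<le> sum f F" using insert by (auto intro: sum_nonneg)
  have "g (sum f (insert x F)) = g (f x + sum f F)" using insert by simp
  also have "\<dots> \<le> g (f x) + g (sum f F)"
    by (rule g_subadd[OF cc g0]) (use insert nn in auto)
  also have "\<dots> \<le> g (f x) + (\<Sum>y\<in>F. g (f y))"
    using insert nn by auto
  finally show ?case using insert by simp
qed

lemma refine_H:
  fixes g :: "real \<Rightarrow> real"
  assumes ps: "prob_space M" and cc: "concave_on {0..1} g" and g0: "g 0 = 0"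
    and Q: "finite_partition M Q" and R: "finite_partition M R"
    and ref: "\<forall>B\<in>R. \<exists>A\<in>Q. B \<subseteq> A"
  shows "gen_H M g Q \<le> gen_H M g R"
proof -
  interpret prob_space M by (rule ps)
  define \<phi> where "\<phi> B = (SOME A. A \<in> Q \<and> B \<subseteq> A)" for B
  have phi: "\<phi> B \<in> Q \<and> B \<subseteq> \<phi> B" if "B \<in> R" for B
    unfolding \<phi>_def by (rule someI_ex) (use ref that in blast)
  have fQ: "finite Q" and fR: "finite R" using Q R by (auto simp: finite_partition_def)
  have im: "\<phi> ` R \<subseteq> Q" using phi by blast
  have grp: "gen_H M g R = (\<Sum>A\<in>Q. \<Sum>B\<in>{B. B \<in> R \<and> \<phi> B = A}. g (measure M B))"
    unfolding gen_H_def using sum.group[OF fR fQ im, of "\<lambda>B. g (measure M B)"] by simp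
  have "g (measure M A) \<le> (\<Sum>B\<in>{B. B \<in> R \<and> \<phi> B = A}. g (measure M B))" if A: "A \<in> Q" for A
  proof -
    let ?F = "{B. B \<in> R \<and> \<phi> B = A}"
    have fF: "finite ?F" using fR by auto
    have eq: "A = (\<Union>B\<in>?F. B)"
    proof
      show "(\<Union>B\<in>?F. B) \<subseteq> A" using phi by blast
    next
      show "A \<subseteq> (\<Union>B\<in>?F. B)"
      proof
        fix x assume x: "x \<in> A"
        have "x \<in> space M" using x A Q by (auto simp: finite_partition_def)
        then obtain B where B: "B \<in> R" "x \<in> B" using R by (auto simp: finite_partition_def)
        have "\<phi> B \<in> Q" "x \<in> \<phi> B" using phi[OF B(1)] B by auto
        then have "\<phi> B = A" using Q x A unfolding finite_partition_def disjoint_def disjnt_def by blast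
        then show "x \<in> (\<Union>B\<in>?F. B)" using B by blast
      qed
    qed
    have RS: "R \<subseteq> sets M" using R by (auto simp: finite_partition_def)
    have dj: "disjoint_family_on (\<lambda>B. B) ?F"
      using R unfolding finite_partition_def disjoint_def disjnt_def disjoint_family_on_def by blast
    have "measure M A = measure M (\<Union>B\<in>?F. B)" using eq by simp
    also have "\<dots> = (\<Sum>B\<in>?F. measure M B)"
      by (rule measure_finite_Union[OF fF]) (use RS dj in auto)
    finally have mA: "measure M A = (\<Sum>B\<in>?F. measure M B)" .
    have "g (\<Sum>B\<in>?F. measure M B) \<le> (\<Sum>B\<in>?F. g (measure M B))"
      using mA prob_le_1[of A] by (intro g_subadd_sum[OF cc g0 fF]) auto
    then show ?thesis using mA by simp
  qed
  then have "gen_H M g Q \<le> (\<Sum>A\<in>Q. \<Sum>B\<in>{B. B \<in> R \<and> \<phi> B = A}. g (measure M B))"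
    unfolding gen_H_def by (rule sum_mono)
  then show ?thesis using grp by simp
qed

lemma funpow_meas: "S \<in> M \<rightarrow>\<^sub>M M \<Longrightarrow> (S ^^ i) \<in> M \<rightarrow>\<^sub>M M"
  by (induction i) auto

lemma iter_join_partition:
  assumes S: "S \<in> M \<rightarrow>\<^sub>M M" and P: "finite_partition M P"
  shows "finite_partition M (iter_join M S P n)"
proof -
  let ?cell = "\<lambda>c. space M \<inter> (\<Inter>i\<in>{..<n}. (S ^^ i) -` c i)"
  have Si: "(S ^^ i) \<in> M \<rightarrow>\<^sub>M M" for i using funpow_meas[OF S] .
  have sp: "(S ^^ i) x \<in> space M" if "x \<in> space M" for i x
    using Si[of i] that by (meson measurable_space)
  have fin: "finite (iter_join M S P n)"
  proof (rule finite_subset)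
    show "iter_join M S P n \<subseteq> ?cell ` (PiE {..<n} (\<lambda>_. P))"
    proof
      fix A assume "A \<in> iter_join M S P n"
      then obtain c where c: "\<forall>i<n. c i \<in> P" "A = ?cell c" unfolding iter_join_def by blast
      have "restrict c {..<n} \<in> PiE {..<n} (\<lambda>_. P)" using c by auto
      moreover have "?cell (restrict c {..<n}) = A" using c by auto
      ultimately show "A \<in> ?cell ` (PiE {..<n} (\<lambda>_. P))" by blast
    qed
    show "finite (?cell ` (PiE {..<n} (\<lambda>_. P)))"
      using P by (auto simp: finite_partition_def intro!: finite_PiE)
  qed
  have sets: "iter_join M S P n \<subseteq> sets M"
  proof
    fix A assume "A \<in> iter_join M S P n"
    then obtain c where c: "\<forall>i<n. c i \<in> P" "A = ?cell c" unfolding iter_join_def by blast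
    show "A \<in> sets M"
    proof (cases "n = 0")
      case True then show ?thesis using c by simp
    next
      case False
      have "A = (\<Inter>i\<in>{..<n}. (S ^^ i) -` c i \<inter> space M)" using c False by auto
      also have "\<dots> \<in> sets M"
        using False c P Si by (intro sets.finite_INT) (auto simp: finite_partition_def)
      finally show ?thesis .
    qed
  qed
  have un: "\<Union>(iter_join M S P n) = space M"
  proof
    show "\<Union>(iter_join M S P n) \<subseteq> space M" unfolding iter_join_def by auto
    show "space M \<subseteq> \<Union>(iter_join M S P n)"
    proof
      fix x assume x: "x \<in> space M"
      define c where "c i = (SOME A. A \<in> P \<and> (S ^^ i) x \<in> A)" for i
      have c: "c i \<in> P \<and> (S ^^ i) x \<in> c i" for i
        unfolding c_def by (rule someI_ex) (use P sp[OF x, of i] in \<open>auto simp: finite_partition_def\<close>)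
      have "?cell c \<in> iter_join M S P n" unfolding iter_join_def using c by blast
      moreover have "x \<in> ?cell c" using c x by auto
      ultimately show "x \<in> \<Union>(iter_join M S P n)" by blast
    qed
  qed
  have dj: "disjoint (iter_join M S P n)"
    unfolding disjoint_def disjnt_def
  proof (intro ballI impI)
    fix A B assume A: "A \<in> iter_join M S P n" and B: "B \<in> iter_join M S P n" and ne: "A \<noteq> B"
    obtain c where c: "\<forall>i<n. c i \<in> P" "A = ?cell c" using A unfolding iter_join_def by blast
    obtain d where d: "\<forall>i<n. d i \<in> P" "B = ?cell d" using B unfolding iter_join_def by blast
    show "A \<inter> B = {}"
    proof (rule ccontr)
      assume "A \<inter> B \<noteq> {}"
      then obtain x where x: "x \<in> A" "x \<in> B" by blast
      have "c i = d i" if "i < n" for i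
      proof -
        have "(S ^^ i) x \<in> c i" "(S ^^ i) x \<in> d i" using x c d that by auto
        then show ?thesis using P c d that unfolding finite_partition_def disjoint_def disjnt_def by blast
      qed
      then have "A = B" using c d by auto
      then show False using ne by simp
    qed
  qed
  show ?thesis using fin sets un dj by (simp add: finite_partition_def)
qed

lemma iter_join_refine:
  assumes m: "m \<ge> 1"
  shows "\<forall>B\<in>iter_join M T P (m * n). \<exists>A\<in>iter_join M (T ^^ m) P n. B \<subseteq> A"
proof
  fix B assume "B \<in> iter_join M T P (m * n)"
  then obtain c where c: "\<forall>i<m*n. c i \<in> P" "B = space M \<inter> (\<Inter>i\<in>{..<m*n}. (T ^^ i) -` c i)"
    unfolding iter_join_def by blast
  define d where "d i = c (m * i)" for i
  have lt: "m * i < m * n" if "i < n" for i using that m by simp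
  have d: "\<forall>i<n. d i \<in> P" using c lt by (auto simp: d_def)
  let ?A = "space M \<inter> (\<Inter>i\<in>{..<n}. ((T ^^ m) ^^ i) -` d i)"
  have "?A \<in> iter_join M (T ^^ m) P n" unfolding iter_join_def using d by blast
  moreover have "B \<subseteq> ?A"
  proof
    fix x assume x: "x \<in> B"
    have "x \<in> ((T ^^ m) ^^ i) -` d i" if "i < n" for i
      using x c lt[OF that] by (auto simp: d_def funpow_mult)
    then show "x \<in> ?A" using x c by auto
  qed
  ultimately show "\<exists>A\<in>iter_join M (T ^^ m) P n. B \<subseteq> A" by blast
qed

theorem mainTheorem16:
  fixes M :: "'a measure" and T :: "'a \<Rightarrow> 'a" and m :: nat and g :: "real \<Rightarrow> real"
  assumes "lebesgue_space M" and "automorphism M T" and "m \<ge> 1" and "g \<in> G0"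
  shows "gen_entropy M g (T ^^ m) \<le> ereal (real m) * gen_entropy M g T"
proof -
  have ps: "prob_space M" using assms(1) by (simp add: lebesgue_space_def)
  have T: "T \<in> M \<rightarrow>\<^sub>M M" using assms(2) by (simp add: automorphism_def)
  have Tm: "T ^^ m \<in> M \<rightarrow>\<^sub>M M" by (rule funpow_meas[OF T])
  have cc: "concave_on {0..1} g" and g0: "g 0 = 0" using assms(4) by (auto simp: G0_def)
  have m0: "real m > 0" using assms(3) by simp
  have mpos: "0 < m" using assms(3) by simp
  have key: "gen_entropy_part M g (T ^^ m) P \<le> ereal (real m) * gen_entropy_part M g T P"
    if P: "finite_partition M P" for P
  proof -
    define b where "b = (\<lambda>k. ereal (gen_H M g (iter_join M T P k) / real k))"
    have le: "ereal (gen_H M g (iter_join M (T ^^ m) P n) / real n) \<le> ereal (real m) * b (m * n)" for n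
    proof (cases "n = 0")
      case True then show ?thesis by (simp add: b_def)
    next
      case False
      have "gen_H M g (iter_join M (T ^^ m) P n) \<le> gen_H M g (iter_join M T P (m * n))"
        by (rule refine_H[OF ps cc g0 iter_join_partition[OF Tm P] iter_join_partition[OF T P]
              iter_join_refine[OF assms(3)]])
      then have "gen_H M g (iter_join M (T ^^ m) P n) / real n \<le> real m * (gen_H M g (iter_join M T P (m * n)) / real (m * n))"
        using False m0 by (simp add: divide_right_mono)
      then show ?thesis by (simp add: b_def)
    qed
    have "gen_entropy_part M g (T ^^ m) P \<le> limsup (\<lambda>n. ereal (real m) * b (m * n))"
      unfolding gen_entropy_part_def by (rule Limsup_mono) (use le in auto)
    also have "\<dots> = ereal (real m) * limsup (b \<circ> (\<lambda>n. m * n))"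
      by (subst limsup_ereal_mult_left) (auto simp: comp_def)
    also have "\<dots> \<le> ereal (real m) * limsup b"
      by (rule ereal_mult_left_mono) (auto intro!: limsup_subseq_mono simp: strict_mono_def mpos)
    finally show ?thesis by (simp add: gen_entropy_part_def b_def)
  qed
  show ?thesis unfolding gen_entropy_def
  proof (rule SUP_least)
    fix P assume "P \<in> {P. finite_partition M P}"
    then have P: "finite_partition M P" by simp
    have "gen_entropy_part M g T P \<le> (SUP P\<in>{P. finite_partition M P}. gen_entropy_part M g T P)"
      using P by (auto intro: SUP_upper)
    then have "ereal (real m) * gen_entropy_part M g T P \<le> ereal (real m) * (SUP P\<in>{P. finite_partition M P}. gen_entropy_part M g T P)"
      by (rule ereal_mult_left_mono) simp
    then show "gen_entropy_part M g (T ^^ m) P \<le> ereal (real m) * (SUP P\<in>{P. finite_partition M P}. gen_entropy_part M g T P)"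
      using key[OF P] by simp
  qed
qed

end
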